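(* Let $p>2$ be a prime, $m\ge2$, and $c_1,\ldots,c_{2m}\in\mathbb{Z}_p$ with $c_i\not\equiv0\pmod p$. Let $G$ be the pro-$p$-group with generators $x_1,\ldots,x_{2m}$ and relations $$x_1^{pc_1}[x_1,x_2]=1,\ x_2^{pc_2}[x_2,x_3]=1,\ \ldots,\ x_{2m-1}^{pc_{2m-1}}[x_{2m-1},x_{2m}]=1,\ x_{2m}^{pc_{2m}}[x_{2m},x_1]=1,$$ i.e. $G=F/R$ with $F$ the free pro-$p$-group on $x_1,\dots,x_{2m}$ and $R$ the closed normal subgroup generated by the left-hand sides. Then for every $n<p$, every continuous homomorphism $G\to\mathrm{GL}_n^{(1)}(\mathbb{Z}_p)$ is trivial.
   Context: $\mathrm{GL}_n^{(1)}(\mathbb{Z}_p)=\{X\in\mathrm{GL}_n(\mathbb{Z}_p): X\equiv 1 \bmod p\}$; $[x,y]=x^{-1}y^{-1}xy$. *)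

theory Defs
  imports "HOL-Computational_Algebra.Primes"
begin

text \<open>p-adic integers are represented as coherent sequences of residues:
  a p-adic integer a is given by its residues a k \<in> {0..<p^k} modulo p^k,
  with a (k+1) mod p^k = a k (the inverse limit of Z/p^k).\<close>

definition padic :: "int \<Rightarrow> (nat \<Rightarrow> int) \<Rightarrow> bool" where
  "padic p a \<longleftrightarrow> (\<forall>k. 0 \<le> a k \<and> a k < p ^ k \<and> a (Suc k) mod p ^ k = a k)"

text \<open>A matrix over Z_p: X i j is the p-adic entry (i,j); entries outside n x n are 0.\<close>

type_synonym zpmat = "nat \<Rightarrow> nat \<Rightarrow> nat \<Rightarrow> int"

definition zpmat :: "int \<Rightarrow> nat \<Rightarrow> zpmat \<Rightarrow> bool" where
  "zpmat p n X \<longleftrightarrow> (\<forall>i j. (i < n \<and> j < n \<longrightarrow> padic p (X i j)) \<and>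
                        (\<not> (i < n \<and> j < n) \<longrightarrow> X i j = (\<lambda>k. 0)))"

definition mat_mul :: "int \<Rightarrow> nat \<Rightarrow> zpmat \<Rightarrow> zpmat \<Rightarrow> zpmat" where
  "mat_mul p n X Y = (\<lambda>i j k. if i < n \<and> j < n
      then (\<Sum>l<n. X i l k * Y l j k) mod p ^ k else 0)"

definition mat_one :: "int \<Rightarrow> nat \<Rightarrow> zpmat" where
  "mat_one p n = (\<lambda>i j k. if i = j \<and> i < n then 1 mod p ^ k else 0)"

definition mat_inv :: "int \<Rightarrow> nat \<Rightarrow> zpmat \<Rightarrow> zpmat" where
  "mat_inv p n X = (THE Y. zpmat p n Y \<and> mat_mul p n X Y = mat_one p n \<and> mat_mul p n Y X = mat_one p n)"

definition GL1 :: "int \<Rightarrow> nat \<Rightarrow> zpmat \<Rightarrow> bool" where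
  "GL1 p n X \<longleftrightarrow> zpmat p n X
     \<and> (\<exists>Y. zpmat p n Y \<and> mat_mul p n X Y = mat_one p n \<and> mat_mul p n Y X = mat_one p n)
     \<and> (\<forall>i j. X i j 1 = mat_one p n i j 1)"

primrec mat_pow :: "int \<Rightarrow> nat \<Rightarrow> zpmat \<Rightarrow> nat \<Rightarrow> zpmat" where
  "mat_pow p n X 0 = mat_one p n"
| "mat_pow p n X (Suc e) = mat_mul p n X (mat_pow p n X e)"

text \<open>Power with a p-adic exponent a (for X \<equiv> 1 mod p): the continuous extension
  X^a = lim X^(a_j); modulo p^k it equals X^(a k) modulo p^k.\<close>

definition mat_zpow :: "int \<Rightarrow> nat \<Rightarrow> zpmat \<Rightarrow> (nat \<Rightarrow> int) \<Rightarrow> zpmat" where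
  "mat_zpow p n X a = (\<lambda>i j k. mat_pow p n X (nat (a k)) i j k)"

definition padic_times_p :: "int \<Rightarrow> (nat \<Rightarrow> int) \<Rightarrow> (nat \<Rightarrow> int)" where
  "padic_times_p p c = (\<lambda>k. (p * c k) mod p ^ k)"

definition mat_comm :: "int \<Rightarrow> nat \<Rightarrow> zpmat \<Rightarrow> zpmat \<Rightarrow> zpmat" where
  "mat_comm p n X Y = mat_mul p n (mat_inv p n X)
      (mat_mul p n (mat_inv p n Y) (mat_mul p n X Y))"

end

theory Submission
  imports Defs "Jordan_Normal_Form.Determinant" "HOL-Number_Theory.Cong"
begin


type_synonym imat = "nat \<Rightarrow> nat \<Rightarrow> int"

definition zmm :: "nat \<Rightarrow> imat \<Rightarrow> imat \<Rightarrow> imat" where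
  "zmm n A B = (\<lambda>i j. \<Sum>l<n. A i l * B l j)"
definition zI :: imat where "zI = (\<lambda>i j. if i = j then 1 else 0)"
definition zc :: "nat \<Rightarrow> int \<Rightarrow> imat \<Rightarrow> imat \<Rightarrow> bool" where
  "zc n q A B \<longleftrightarrow> (\<forall>i<n. \<forall>j<n. [A i j = B i j] (mod q))"
primrec zpow :: "nat \<Rightarrow> imat \<Rightarrow> nat \<Rightarrow> imat" where
  "zpow n A 0 = zI" | "zpow n A (Suc e) = zmm n A (zpow n A e)"
definition ztr :: "nat \<Rightarrow> imat \<Rightarrow> int" where "ztr n A = (\<Sum>i<n. A i i)"

lemma zc_refl[simp]: "zc n q A A" by (simp add: zc_def)
lemma zc_sym: "zc n q A B \<Longrightarrow> zc n q B A" by (auto simp: zc_def cong_sym)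
lemma zc_trans[trans]: "zc n q A B \<Longrightarrow> zc n q B C \<Longrightarrow> zc n q A C"
  unfolding zc_def by (metis cong_trans)
lemma zc_dvd: "zc n q A B \<Longrightarrow> q' dvd q \<Longrightarrow> zc n q' A B"
  by (auto simp: zc_def intro: cong_dvd_modulus)
lemma zc_0: "zc n 0 A B \<longleftrightarrow> (\<forall>i<n. \<forall>j<n. A i j = B i j)"
  by (simp add: zc_def)
lemma zc_0D: "zc n 0 A B \<Longrightarrow> zc n q A B"
  using zc_dvd by fastforce

lemma zc_mm: assumes "zc n q A A'" "zc n q B B'" shows "zc n q (zmm n A B) (zmm n A' B')"
  using assms unfolding zc_def zmm_def by (auto intro!: cong_sum cong_mult)

lemma zmm_assoc: "zmm n (zmm n A B) C = zmm n A (zmm n B C)"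
  unfolding zmm_def by (auto simp: sum_distrib_left sum_distrib_right mult.assoc intro!: ext sum.swap)

lemma zmm_I_left: "zc n 0 (zmm n zI A) A"
proof -
  have "(\<Sum>l<n. (if i = l then 1 else 0) * A l j) = A i j" if "i < n" for i j
  proof -
    have "(\<Sum>l<n. (if i = l then 1 else 0) * A l j) = (\<Sum>l<n. if i = l then A l j else 0)"
      by (rule sum.cong) auto
    also have "\<dots> = A i j" using that by (simp add: sum.delta)
    finally show ?thesis .
  qed
  thus ?thesis unfolding zc_def zmm_def zI_def by auto
qed
lemma zmm_I_right: "zc n 0 (zmm n A zI) A"
proof -
  have "(\<Sum>l<n. A i l * (if l = j then 1 else 0)) = A i j" if "j < n" for i j
  proof -
    have "(\<Sum>l<n. A i l * (if l = j then 1 else 0)) = (\<Sum>l<n. if j = l then A i l else 0)"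
      by (rule sum.cong) auto
    also have "\<dots> = A i j" using that by (simp add: sum.delta)
    finally show ?thesis .
  qed
  thus ?thesis unfolding zc_def zmm_def zI_def by auto
qed

lemma zc_add: "zc n q A A' \<Longrightarrow> zc n q B B' \<Longrightarrow> zc n q (\<lambda>i j. A i j + B i j) (\<lambda>i j. A' i j + B' i j)"
  unfolding zc_def by (auto intro: cong_add)
lemma zc_diff: "zc n q A A' \<Longrightarrow> zc n q B B' \<Longrightarrow> zc n q (\<lambda>i j. A i j - B i j) (\<lambda>i j. A' i j - B' i j)"
  unfolding zc_def by (auto intro: cong_diff)
lemma zc_smul: "zc n q A A' \<Longrightarrow> zc n q (\<lambda>i j. c * A i j) (\<lambda>i j. c * A' i j)"
  unfolding zc_def by (auto intro: cong_mult)

lemma zmm_add_left: "zmm n (\<lambda>i j. A i j + B i j) C = (\<lambda>i j. zmm n A C i j + zmm n B C i j)"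
  unfolding zmm_def by (auto simp: algebra_simps sum.distrib)
lemma zmm_add_right: "zmm n C (\<lambda>i j. A i j + B i j) = (\<lambda>i j. zmm n C A i j + zmm n C B i j)"
  unfolding zmm_def by (auto simp: algebra_simps sum.distrib)
lemma zmm_diff_left: "zmm n (\<lambda>i j. A i j - B i j) C = (\<lambda>i j. zmm n A C i j - zmm n B C i j)"
  unfolding zmm_def by (auto simp: algebra_simps sum_subtractf)
lemma zmm_diff_right: "zmm n C (\<lambda>i j. A i j - B i j) = (\<lambda>i j. zmm n C A i j - zmm n C B i j)"
  unfolding zmm_def by (auto simp: algebra_simps sum_subtractf)
lemma zmm_smul_left: "zmm n (\<lambda>i j. c * A i j) C = (\<lambda>i j. c * zmm n A C i j)"
  unfolding zmm_def by (auto simp: algebra_simps sum_distrib_left)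
lemma zmm_smul_right: "zmm n C (\<lambda>i j. c * A i j) = (\<lambda>i j. c * zmm n C A i j)"
  unfolding zmm_def by (auto simp: algebra_simps sum_distrib_left)

lemma zpow_add: "zc n 0 (zpow n A (a+b)) (zmm n (zpow n A a) (zpow n A b))"
proof (induction a)
  case 0 show ?case using zc_sym[OF zmm_I_left] by simp
next
  case (Suc a)
  have "zc n 0 (zmm n A (zpow n A (a+b))) (zmm n A (zmm n (zpow n A a) (zpow n A b)))"
    by (rule zc_mm[OF zc_refl Suc.IH])
  thus ?case by (simp add: zmm_assoc)
qed

lemma zpow_comm: "zc n 0 (zmm n A (zpow n A e)) (zmm n (zpow n A e) A)"
proof -
  have "zc n 0 (zpow n A (e+1)) (zmm n (zpow n A e) (zpow n A 1))" by (rule zpow_add)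
  moreover have "zc n 0 (zmm n (zpow n A e) (zpow n A 1)) (zmm n (zpow n A e) A)"
    by (rule zc_mm[OF zc_refl], simp add: zmm_I_right)
  ultimately show ?thesis by (auto intro: zc_trans)
qed

lemma zpow_cong: "zc n q A B \<Longrightarrow> zc n q (zpow n A e) (zpow n B e)"
  by (induction e) (auto intro: zc_mm)

lemma ztr_comm: "ztr n (zmm n A B) = ztr n (zmm n B A)"
  unfolding ztr_def zmm_def by (subst sum.swap) (simp add: mult.commute)
lemma ztr_cong: "zc n q A B \<Longrightarrow> [ztr n A = ztr n B] (mod q)"
  unfolding ztr_def zc_def by (auto intro: cong_sum)
lemma ztr_add: "ztr n (\<lambda>i j. A i j + B i j) = ztr n A + ztr n B"
  unfolding ztr_def by (simp add: sum.distrib)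
lemma ztr_smul: "ztr n (\<lambda>i j. c * A i j) = c * ztr n A"
  unfolding ztr_def by (simp add: sum_distrib_left)


definition zO :: imat where "zO = (\<lambda>i j. 0)"

lemma zmm_O_right[simp]: "zmm n A zO = zO" by (simp add: zmm_def zO_def)
lemma zmm_O_left[simp]: "zmm n zO A = zO" by (simp add: zmm_def zO_def)

lemma prime_cancel:
  fixes p c x :: int
  assumes "prime p" "\<not> p dvd c" "[c * x = 0] (mod p)" shows "[x = 0] (mod p)"
  using assms by (simp add: cong_0_iff prime_dvd_mult_iff)

lemma zc_cancel:
  assumes "prime p" "\<not> p dvd c" "zc n p (\<lambda>i j. c * A i j) zO" shows "zc n p A zO"
  using assms prime_cancel[OF assms(1,2)] unfolding zc_def zO_def by blast

lemma zpow_ge_nil: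
  assumes "zc n p (zpow n B N) zO" "N \<le> r" shows "zc n p (zpow n B r) zO"
proof -
  have "zc n p (zpow n B ((r - N) + N)) (zmm n (zpow n B (r-N)) (zpow n B N))"
    by (rule zc_0D[OF zpow_add])
  also have "zc n p \<dots> (zmm n (zpow n B (r-N)) zO)" by (rule zc_mm[OF zc_refl assms(1)])
  finally show ?thesis using assms(2) by simp
qed

lemma ann_lemma:
  assumes p: "prime p" and c: "\<not> p dvd c"
    and rel: "zc n p (\<lambda>i j. zmm n B A i j - zmm n A B i j) (\<lambda>i j. c * A i j)"
    and nil: "zc n p (zpow n B N) zO"
  shows "zc n p A zO"
proof -
  define f where "f r s = zmm n (zmm n (zpow n B r) A) (zpow n B s)" for r s
  have step: "zc n p (\<lambda>i j. c * f r s i j) (\<lambda>i j. f (Suc r) s i j - f r (Suc s) i j)" for r s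
  proof -
    have e1: "(\<lambda>i j. c * f r s i j) = zmm n (zmm n (zpow n B r) (\<lambda>i j. c * A i j)) (zpow n B s)"
      unfolding f_def zmm_smul_left zmm_smul_right ..
    have c2: "zc n p (zmm n (zmm n (zpow n B r) (\<lambda>i j. c * A i j)) (zpow n B s))
       (zmm n (zmm n (zpow n B r) (\<lambda>i j. zmm n B A i j - zmm n A B i j)) (zpow n B s))"
      by (rule zc_mm[OF zc_mm[OF zc_refl zc_sym[OF rel]] zc_refl])
    have e3: "zmm n (zmm n (zpow n B r) (\<lambda>i j. zmm n B A i j - zmm n A B i j)) (zpow n B s)
       = (\<lambda>i j. zmm n (zmm n (zpow n B r) (zmm n B A)) (zpow n B s) i j
              - zmm n (zmm n (zpow n B r) (zmm n A B)) (zpow n B s) i j)"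
      by (simp only: zmm_diff_right[of n "zpow n B r" "zmm n B A" "zmm n A B"]
           zmm_diff_left[of n "zmm n (zpow n B r) (zmm n B A)" "zmm n (zpow n B r) (zmm n A B)"])
    have c4: "zc n p (zmm n (zmm n (zpow n B r) (zmm n B A)) (zpow n B s)) (f (Suc r) s)"
    proof -
      have "zmm n (zpow n B r) (zmm n B A) = zmm n (zmm n (zpow n B r) B) A" by (simp only: zmm_assoc)
      moreover have "zc n p (zmm n (zmm n (zpow n B r) B) A) (zmm n (zpow n B (Suc r)) A)"
        unfolding zpow.simps by (rule zc_mm[OF zc_0D[OF zc_sym[OF zpow_comm]] zc_refl])
      ultimately show ?thesis unfolding f_def by (metis zc_mm zc_refl)
    qed
    have e5: "zmm n (zmm n (zpow n B r) (zmm n A B)) (zpow n B s) = f r (Suc s)"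
      unfolding f_def zpow.simps by (simp only: zmm_assoc)
    have "zc n p (\<lambda>i j. c * f r s i j)
       (\<lambda>i j. zmm n (zmm n (zpow n B r) (zmm n B A)) (zpow n B s) i j
              - zmm n (zmm n (zpow n B r) (zmm n A B)) (zpow n B s) i j)"
      using c2 unfolding e1 e3 .
    moreover have "zc n p (\<lambda>i j. zmm n (zmm n (zpow n B r) (zmm n B A)) (zpow n B s) i j
              - zmm n (zmm n (zpow n B r) (zmm n A B)) (zpow n B s) i j)
         (\<lambda>i j. f (Suc r) s i j - f r (Suc s) i j)"
      by (rule zc_diff[OF c4], unfold e5, rule zc_refl)
    ultimately show ?thesis by (rule zc_trans)
  qed
  have zero: "zc n p (f r s) zO" if "N \<le> r \<or> N \<le> s" for r s
    using that
  proof
    assume "N \<le> r"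
    hence "zc n p (f r s) (zmm n (zmm n zO A) (zpow n B s))"
      unfolding f_def by (intro zc_mm zc_refl zpow_ge_nil[OF nil])
    thus ?thesis by simp
  next
    assume "N \<le> s"
    hence "zc n p (f r s) (zmm n (zmm n (zpow n B r) A) zO)"
      unfolding f_def by (intro zc_mm zc_refl zpow_ge_nil[OF nil])
    thus ?thesis by simp
  qed
  have main: "\<forall>r s. 2*N \<le> r + s + d \<longrightarrow> zc n p (f r s) zO" for d
  proof (induction d)
    case 0 show ?case
    proof (intro allI impI)
      fix r s assume "2*N \<le> r + s + 0"
      hence "N \<le> r \<or> N \<le> s" by linarith
      thus "zc n p (f r s) zO" by (rule zero)
    qed
  next
    case (Suc d)
    show ?case
    proof (intro allI impI)
      fix r s assume h: "2*N \<le> r + s + Suc d"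
      show "zc n p (f r s) zO"
      proof (cases "N \<le> r \<or> N \<le> s")
        case True then show ?thesis by (rule zero)
      next
        case False
        have a: "zc n p (f (Suc r) s) zO" "zc n p (f r (Suc s)) zO" using Suc.IH h by auto
        have "zc n p (\<lambda>i j. c * f r s i j) (\<lambda>i j. zO i j - zO i j)"
          using zc_trans[OF step zc_diff[OF a]] .
        hence "zc n p (\<lambda>i j. c * f r s i j) zO" by (simp add: zO_def)
        thus ?thesis by (rule zc_cancel[OF p c])
      qed
    qed
  qed
  have "zc n p (f 0 0) zO" using main[of "2*N"] by simp
  moreover have "zc n 0 (f 0 0) A"
    unfolding f_def zpow.simps using zc_trans[OF zmm_I_right zmm_I_left] .
  ultimately show ?thesis by (meson zc_0D zc_sym zc_trans)
qed


lemma zc_mod_iff: "zc n q A B \<longleftrightarrow> (\<forall>i<n. \<forall>j<n. A i j mod q = B i j mod q)"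
  by (simp add: zc_def cong_def)

lemma pigeon:
  assumes "p > 0"
  shows "\<exists>N\<ge>1. zc n p (zpow n B (2*N)) (zpow n B N)"
proof -
  define g where "g k = map (\<lambda>i. map (\<lambda>j. zpow n B k i j mod p) [0..<n]) [0..<n]" for k
  define S1 where "S1 = {xs. set xs \<subseteq> {0..<p} \<and> length xs = n}"
  have f1: "finite S1" unfolding S1_def by (rule finite_lists_length_eq) simp
  have f2: "finite {xss. set xss \<subseteq> S1 \<and> length xss = n}" by (rule finite_lists_length_eq[OF f1])
  have "range g \<subseteq> {xss. set xss \<subseteq> S1 \<and> length xss = n}"
    unfolding g_def S1_def using assms by auto
  hence fin: "finite (range g)" using f2 finite_subset by blast
  have "\<not> inj g"
  proof
    assume "inj g"
    hence "finite (UNIV :: nat set)" using fin finite_imageD by blast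
    thus False by simp
  qed
  then obtain a0 b0 where ab0: "a0 \<noteq> b0" "g a0 = g b0" unfolding inj_def by blast
  obtain a b where ab: "a < b" "g a = g b"
    using ab0 by (metis linorder_neqE_nat)
  have cab: "zc n p (zpow n B a) (zpow n B b)"
    unfolding zc_mod_iff
  proof (intro allI impI)
    fix i j assume ij: "i < n" "j < n"
    have "g a ! i ! j = g b ! i ! j" using ab by simp
    thus "zpow n B a i j mod p = zpow n B b i j mod p" using ij unfolding g_def by simp
  qed
  define d where "d = b - a"
  have d1: "d \<ge> 1" using ab unfolding d_def by simp
  have per1: "zc n p (zpow n B (s + d)) (zpow n B s)" if "a \<le> s" for s
  proof -
    have "zc n p (zpow n B (s + d)) (zmm n (zpow n B (s - a)) (zpow n B b))"
      using zc_0D[OF zpow_add[of n B "s - a" b]] that ab unfolding d_def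
      by (metis add.commute le_add_diff_inverse2 less_imp_le_nat ordered_cancel_comm_monoid_diff_class.add_diff_assoc2)
    also have "zc n p \<dots> (zmm n (zpow n B (s - a)) (zpow n B a))"
      by (rule zc_mm[OF zc_refl zc_sym[OF cab]])
    also have "zc n p \<dots> (zpow n B s)"
      using zc_0D[OF zc_sym[OF zpow_add[of n B "s - a" a]]] that by simp
    finally show ?thesis .
  qed
  have per: "zc n p (zpow n B (s + t * d)) (zpow n B s)" if "a \<le> s" for s t
  proof (induction t)
    case 0 then show ?case by simp
  next
    case (Suc t)
    have "zc n p (zpow n B (s + t * d + d)) (zpow n B (s + t * d))"
      by (rule per1) (use that in simp)
    hence "zc n p (zpow n B (s + Suc t * d)) (zpow n B (s + t * d))" by (simp add: ac_simps)
    thus ?case using Suc.IH by (rule zc_trans)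
  qed
  define N where "N = (a + 1) * d"
  have N1: "N \<ge> 1" using d1 unfolding N_def by simp
  have "a \<le> N" using d1 unfolding N_def by (metis add.commute le_add1 mult_le_mono2 nat_mult_1_right order_trans distrib_left mult.commute)
  hence z: "zc n p (zpow n B (N + (a+1) * d)) (zpow n B N)" by (rule per)
  have "N + (a+1) * d = 2 * N" unfolding N_def by simp
  with z have "zc n p (zpow n B (2*N)) (zpow n B N)" by (simp add: mult_2)
  with N1 show ?thesis by blast
qed

lemma trace_zero:
  assumes p: "prime p" and c: "\<not> p dvd c"
    and rel: "zc n p (\<lambda>i j. zmm n B' B i j - zmm n B B' i j) (\<lambda>i j. c * B i j)"
  shows "[ztr n (zpow n B (Suc e)) = 0] (mod p)"
proof -
  define T where "T = zpow n B e"
  have r2: "zc n p (zmm n B' B) (\<lambda>i j. zmm n B B' i j + c * B i j)"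
  proof -
    have "zc n p (\<lambda>i j. (zmm n B' B i j - zmm n B B' i j) + zmm n B B' i j) (\<lambda>i j. c * B i j + zmm n B B' i j)"
      by (rule zc_add[OF rel zc_refl])
    thus ?thesis by (simp add: add.commute)
  qed
  have "ztr n (zmm n B' (zmm n B T)) = ztr n (zmm n (zmm n B' B) T)" by (simp add: zmm_assoc)
  also have "[\<dots> = ztr n (zmm n (\<lambda>i j. zmm n B B' i j + c * B i j) T)] (mod p)"
    by (rule ztr_cong[OF zc_mm[OF r2 zc_refl]])
  also have "ztr n (zmm n (\<lambda>i j. zmm n B B' i j + c * B i j) T) = ztr n (zmm n (zmm n B B') T) + c * ztr n (zmm n B T)"
    by (simp only: zmm_add_left[of n "zmm n B B'" "\<lambda>i j. c * B i j"] zmm_smul_left ztr_add ztr_smul)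
  also have "ztr n (zmm n (zmm n B B') T) = ztr n (zmm n B' (zmm n T B))"
    by (metis zmm_assoc ztr_comm)
  also have "[ztr n (zmm n B' (zmm n T B)) + c * ztr n (zmm n B T) = ztr n (zmm n B' (zmm n B T)) + c * ztr n (zmm n B T)] (mod p)"
    unfolding T_def by (intro cong_add cong_refl ztr_cong zc_mm zc_refl zc_0D[OF zc_sym[OF zpow_comm]])
  finally have "[ztr n (zmm n B' (zmm n B T)) + 0 = ztr n (zmm n B' (zmm n B T)) + c * ztr n (zmm n B T)] (mod p)"
    by simp
  hence "[c * ztr n (zmm n B T) = 0] (mod p)"
    by (metis cong_add_lcancel cong_sym)
  hence "[ztr n (zmm n B T) = 0] (mod p)" by (rule prime_cancel[OF p c])
  thus ?thesis unfolding T_def by simp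
qed


definition zdot :: "nat \<Rightarrow> (nat \<Rightarrow> int) \<Rightarrow> (nat \<Rightarrow> int) \<Rightarrow> int" where
  "zdot n u v = (\<Sum>l<n. u l * v l)"
definition zmv :: "nat \<Rightarrow> imat \<Rightarrow> (nat \<Rightarrow> int) \<Rightarrow> nat \<Rightarrow> int" where
  "zmv n E v = (\<lambda>i. \<Sum>l<n. E i l * v l)"
definition zvm :: "nat \<Rightarrow> (nat \<Rightarrow> int) \<Rightarrow> imat \<Rightarrow> nat \<Rightarrow> int" where
  "zvm n u E = (\<lambda>j. \<Sum>l<n. u l * E l j)"
definition vz :: "nat \<Rightarrow> int \<Rightarrow> (nat \<Rightarrow> int) \<Rightarrow> bool" where
  "vz n q u \<longleftrightarrow> (\<forall>i<n. [u i = 0] (mod q))"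
definition bio :: "nat \<Rightarrow> int \<Rightarrow> nat \<Rightarrow> (nat \<Rightarrow> nat \<Rightarrow> int) \<Rightarrow> (nat \<Rightarrow> nat \<Rightarrow> int) \<Rightarrow> bool" where
  "bio n p k us vs \<longleftrightarrow> (\<forall>i<k. \<forall>j<k. [zdot n (us i) (vs j) = (if i = j then 1 else 0)] (mod p))"

lemma zmv_sub: "zmv n (\<lambda>i j. E i j - v i * u j) x a = zmv n E x a - v a * zdot n u x"
  unfolding zmv_def zdot_def by (simp add: algebra_simps sum_subtractf sum_distrib_left)
lemma zvm_sub: "zvm n x (\<lambda>i j. E i j - v i * u j) b = zvm n x E b - zdot n x v * u b"
  unfolding zvm_def zdot_def by (simp add: algebra_simps sum_subtractf sum_distrib_right sum_distrib_left)
lemma ztr_sub: "ztr n (\<lambda>i j. E i j - v i * u j) = ztr n E - zdot n u v"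
  unfolding ztr_def zdot_def by (simp add: sum_subtractf mult.commute)
lemma zmm_sub_sq: "zmm n (\<lambda>i j. E i j - v i * u j) (\<lambda>i j. E i j - v i * u j) a b
   = zmm n E E a b - v a * zvm n u E b - zmv n E v a * u b + v a * zdot n u v * u b"
proof -
  have "zmm n (\<lambda>i j. E i j - v i * u j) (\<lambda>i j. E i j - v i * u j) a b
     = (\<Sum>l<n. E a l * E l b - v a * (u l * E l b) - (E a l * v l) * u b + v a * (u l * v l) * u b)"
    unfolding zmm_def by (rule sum.cong) (auto simp: algebra_simps)
  also have "\<dots> = zmm n E E a b - v a * zvm n u E b - zmv n E v a * u b + v a * zdot n u v * u b"
    unfolding zmm_def zvm_def zmv_def zdot_def
    by (simp add: sum.distrib sum_subtractf sum_distrib_left sum_distrib_right)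
  finally show ?thesis .
qed

lemma S_lemma:
  assumes p: "prime p" and bound: "\<And>k us vs. bio n p k us vs \<Longrightarrow> k \<le> n"
  shows "zc n p (zmm n E E) E \<Longrightarrow> bio n p k us vs \<Longrightarrow>
    (\<forall>i<k. vz n p (zmv n E (vs i)) \<and> vz n p (zvm n (us i) E)) \<Longrightarrow>
    \<exists>m. [ztr n E = int m] (mod p) \<and> m + k \<le> n \<and> (\<not> zc n p E zO \<longrightarrow> 1 \<le> m)"
proof (induction "n - k" arbitrary: k E us vs rule: less_induct)
  case less
  note hE = less.prems(1) and hb = less.prems(2) and ha = less.prems(3)
  show ?case
  proof (cases "zc n p E zO")
    case True
    have "[ztr n E = ztr n zO] (mod p)" by (rule ztr_cong[OF True])
    moreover have "ztr n zO = 0" by (simp add: ztr_def zO_def)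
    ultimately show ?thesis using bound[OF hb] True by (intro exI[of _ 0]) auto
  next
    case False
    then obtain i0 j0 where ij0: "i0 < n" "j0 < n" "\<not> [E i0 j0 = 0] (mod p)"
      unfolding zc_def zO_def by blast
    have "\<not> p dvd E i0 j0" using ij0(3) by (simp add: cong_0_iff)
    hence "coprime (E i0 j0) p" using p prime_imp_coprime coprime_commute by blast
    then obtain w where w: "[E i0 j0 * w = 1] (mod p)" using cong_solve_coprime_int by blast
    define v where "v = (\<lambda>i. E i j0)"
    define u where "u = (\<lambda>l. w * E i0 l)"
    define E' where "E' = (\<lambda>i j. E i j - v i * u j)"
    define us' where "us' = us(k := u)"
    define vs' where "vs' = vs(k := v)"
    have hE': "[zmm n E E a b = E a b] (mod p)" if "a < n" "b < n" for a b
      using hE that unfolding zc_def by blast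
    have uv: "[zdot n u v = 1] (mod p)"
    proof -
      have "zdot n u v = w * zmm n E E i0 j0"
        unfolding zdot_def u_def v_def zmm_def by (simp add: sum_distrib_left mult.assoc)
      also have "[\<dots> = w * E i0 j0] (mod p)" by (intro cong_mult cong_refl hE' ij0)
      finally show ?thesis using w by (metis cong_trans mult.commute)
    qed
    have Ev: "[zmv n E v a = v a] (mod p)" if "a < n" for a
      using hE'[OF that ij0(2)] unfolding zmv_def v_def zmm_def by simp
    have uE: "[zvm n u E b = u b] (mod p)" if "b < n" for b
    proof -
      have "zvm n u E b = w * zmm n E E i0 b"
        unfolding zvm_def u_def zmm_def by (simp add: sum_distrib_left mult.assoc)
      also have "[\<dots> = w * E i0 b] (mod p)" by (intro cong_mult cong_refl hE' ij0 that)
      finally show ?thesis unfolding u_def .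
    qed
    have d1: "[zdot n (us i) v = 0] (mod p)" if "i < k" for i
    proof -
      have "zdot n (us i) v = zvm n (us i) E j0" unfolding zdot_def zvm_def v_def ..
      thus ?thesis using ha that ij0 unfolding vz_def by auto
    qed
    have d2: "[zdot n u (vs i) = 0] (mod p)" if "i < k" for i
    proof -
      have "zdot n u (vs i) = w * zmv n E (vs i) i0"
        unfolding zdot_def zmv_def u_def by (simp add: sum_distrib_left mult.assoc)
      moreover have "[zmv n E (vs i) i0 = 0] (mod p)" using ha that ij0 unfolding vz_def by auto
      ultimately show ?thesis by (metis cong_scalar_left mult_zero_right)
    qed
    have idem': "zc n p (zmm n E' E') E'"
      unfolding zc_def
    proof (intro allI impI)
      fix a b assume ab: "a < n" "b < n"
      have "zmm n E' E' a b = zmm n E E a b - v a * zvm n u E b - zmv n E v a * u b + v a * zdot n u v * u b"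
        unfolding E'_def by (rule zmm_sub_sq)
      also have "[\<dots> = E a b - v a * u b - v a * u b + v a * 1 * u b] (mod p)"
        by (intro cong_add cong_diff cong_mult cong_refl hE' ab uE Ev uv)
      also have "E a b - v a * u b - v a * u b + v a * 1 * u b = E' a b" unfolding E'_def by simp
      finally show "[zmm n E' E' a b = E' a b] (mod p)" .
    qed
    have bio': "bio n p (Suc k) us' vs'"
      unfolding bio_def
    proof (intro allI impI)
      fix i j assume "i < Suc k" "j < Suc k"
      then consider "i < k" "j < k" | "i = k" "j < k" | "i < k" "j = k" | "i = k" "j = k"
        by linarith
      thus "[zdot n (us' i) (vs' j) = (if i = j then 1 else 0)] (mod p)"
      proof cases
        case 1 then show ?thesis using hb unfolding bio_def us'_def vs'_def by simp
      next
        case 2 then show ?thesis using d2 unfolding us'_def vs'_def by simp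
      next
        case 3 then show ?thesis using d1 unfolding us'_def vs'_def by simp
      next
        case 4 then show ?thesis using uv unfolding us'_def vs'_def by simp
      qed
    qed
    have ha': "\<forall>i<Suc k. vz n p (zmv n E' (vs' i)) \<and> vz n p (zvm n (us' i) E')"
    proof (intro allI impI conjI)
      fix i assume i: "i < Suc k"
      show "vz n p (zmv n E' (vs' i))"
        unfolding vz_def
      proof (intro allI impI)
        fix a assume a: "a < n"
        have e: "zmv n E' (vs' i) a = zmv n E (vs' i) a - v a * zdot n u (vs' i)"
          unfolding E'_def by (rule zmv_sub)
        show "[zmv n E' (vs' i) a = 0] (mod p)"
        proof (cases "i = k")
          case True
          have "[zmv n E v a - v a * zdot n u v = v a - v a * 1] (mod p)"
            by (intro cong_diff cong_mult cong_refl Ev a uv)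
          thus ?thesis using e True unfolding vs'_def by simp
        next
          case False
          hence ik: "i < k" using i by simp
          have "[zmv n E (vs i) a - v a * zdot n u (vs i) = 0 - v a * 0] (mod p)"
            using ha ik a unfolding vz_def by (intro cong_diff cong_mult cong_refl d2 ik) auto
          thus ?thesis using e False unfolding vs'_def by simp
        qed
      qed
      show "vz n p (zvm n (us' i) E')"
        unfolding vz_def
      proof (intro allI impI)
        fix b assume b: "b < n"
        have e: "zvm n (us' i) E' b = zvm n (us' i) E b - zdot n (us' i) v * u b"
          unfolding E'_def by (rule zvm_sub)
        show "[zvm n (us' i) E' b = 0] (mod p)"
        proof (cases "i = k")
          case True
          have "[zvm n u E b - zdot n u v * u b = u b - 1 * u b] (mod p)"
            by (intro cong_diff cong_mult cong_refl uE b uv)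
          thus ?thesis using e True unfolding us'_def by simp
        next
          case False
          hence ik: "i < k" using i by simp
          have "[zvm n (us i) E b - zdot n (us i) v * u b = 0 - 0 * u b] (mod p)"
            using ha ik b unfolding vz_def by (intro cong_diff cong_mult cong_refl d1 ik) auto
          thus ?thesis using e False unfolding us'_def by simp
        qed
      qed
    qed
    have "Suc k \<le> n" by (rule bound[OF bio'])
    hence lt: "n - Suc k < n - k" by simp
    obtain m' where m': "[ztr n E' = int m'] (mod p)" "m' + Suc k \<le> n"
      using less.hyps[OF lt idem' bio' ha'] by blast
    have "ztr n E = ztr n E' + zdot n u v" unfolding E'_def ztr_sub by simp
    also have "[\<dots> = int m' + 1] (mod p)" by (intro cong_add m' uv)
    finally have "[ztr n E = int (Suc m')] (mod p)" by (simp add: add.commute)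
    thus ?thesis using m'(2) by (intro exI[of _ "Suc m'"]) auto
  qed
qed


lemma det_cong_mod:
  fixes A B :: "int mat"
  assumes A: "A \<in> carrier_mat k k" and B: "B \<in> carrier_mat k k"
    and c: "\<And>i j. i < k \<Longrightarrow> j < k \<Longrightarrow> [A $$ (i,j) = B $$ (i,j)] (mod p)"
  shows "[det A = det B] (mod p)"
  unfolding det_def'[OF A] det_def'[OF B]
proof (intro cong_sum cong_mult cong_refl cong_prod)
  fix \<sigma> i assume s: "\<sigma> \<in> {\<sigma>. \<sigma> permutes {0..<k}}" and i: "i \<in> {0..<k}"
  have "\<sigma> i \<in> {0..<k}" using s i by (simp add: permutes_in_image)
  thus "[A $$ (i, \<sigma> i) = B $$ (i, \<sigma> i)] (mod p)" using i c by auto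
qed

lemma bio_bound:
  assumes p: "prime p" and b: "bio n p k us vs"
  shows "k \<le> n"
proof (rule ccontr)
  assume "\<not> k \<le> n"
  hence nk: "n < k" by simp
  define U :: "int mat" where "U = mat k k (\<lambda>(i,l). if l < n then us i l else 0)"
  define V :: "int mat" where "V = mat k k (\<lambda>(l,j). if l < n then vs j l else 0)"
  have U: "U \<in> carrier_mat k k" and V: "V \<in> carrier_mat k k" unfolding U_def V_def by auto
  have UV: "(U * V) $$ (i,j) = zdot n (us i) (vs j)" if "i < k" "j < k" for i j
  proof -
    have "(U * V) $$ (i,j) = (\<Sum>l\<in>{0..<k}. (if l < n then us i l * vs j l else 0))"
      using that U V unfolding U_def V_def
      by (simp add: scalar_prod_def row_def col_def, intro sum.cong) auto
    also have "\<dots> = (\<Sum>l\<in>{l\<in>{0..<k}. l < n}. us i l * vs j l)"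
      by (rule sum.inter_filter[symmetric]) simp
    also have "{l\<in>{0..<k}. l < n} = {..<n}" using nk by auto
    finally show ?thesis unfolding zdot_def .
  qed
  have "det V = 0"
    unfolding det_def'[OF V]
  proof (rule sum.neutral, intro ballI)
    fix \<sigma> assume s: "\<sigma> \<in> {\<sigma>. \<sigma> permutes {0..<k}}"
    have "\<sigma> n \<in> {0..<k}" using s nk by (simp add: permutes_in_image)
    hence "V $$ (n, \<sigma> n) = 0" using nk unfolding V_def by simp
    hence "(\<Prod>i = 0..<k. V $$ (i, \<sigma> i)) = 0" using nk by (intro prod_zero) auto
    thus "signof \<sigma> * (\<Prod>i = 0..<k. V $$ (i, \<sigma> i)) = 0" by simp
  qed
  hence d0: "det (U * V) = 0" using det_mult[OF U V] by simp
  have "[det (U * V) = det (1\<^sub>m k :: int mat)] (mod p)"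
  proof (rule det_cong_mod[OF mult_carrier_mat[OF U V] one_carrier_mat])
    fix i j assume "i < k" "j < k"
    thus "[(U * V) $$ (i, j) = 1\<^sub>m k $$ (i, j)] (mod p)" using UV b unfolding bio_def by simp
  qed
  hence "[0 = 1] (mod p)" using d0 by simp
  hence "p dvd 1" using cong_0_iff cong_sym by blast
  thus False using p by (simp add: prime_int_iff)
qed


lemma nilp:
  assumes p: "prime p" and np: "int n < p" and c: "\<not> p dvd c"
    and rel: "zc n p (\<lambda>i j. zmm n B' B i j - zmm n B B' i j) (\<lambda>i j. c * B i j)"
  shows "\<exists>N. zc n p (zpow n B N) zO"
proof -
  have p0: "p > 0" using p prime_gt_0_int by blast
  obtain N where N: "N \<ge> 1" "zc n p (zpow n B (2*N)) (zpow n B N)" using pigeon[OF p0] by blast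
  define E where "E = zpow n B N"
  have idem: "zc n p (zmm n E E) E"
  proof -
    have "zc n p (zmm n E E) (zpow n B (N + N))" unfolding E_def by (rule zc_0D[OF zc_sym[OF zpow_add]])
    also have "zc n p \<dots> E" using N(2) unfolding E_def by (simp add: mult_2)
    finally show ?thesis .
  qed
  have tr0: "[ztr n E = 0] (mod p)"
    using trace_zero[OF p c rel, of "N - 1"] N(1) unfolding E_def by simp
  have "bio n p 0 (\<lambda>_ _. 0) (\<lambda>_ _. 0)" by (simp add: bio_def)
  then obtain m where m: "[ztr n E = int m] (mod p)" "m \<le> n" "\<not> zc n p E zO \<longrightarrow> 1 \<le> m"
    using S_lemma[OF p bio_bound[OF p] idem] by fastforce
  have "zc n p E zO"
  proof (rule ccontr)
    assume "\<not> zc n p E zO"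
    hence m1: "1 \<le> m" using m(3) by blast
    have "[int m = 0] (mod p)" using m(1) tr0 by (metis cong_sym cong_trans)
    hence "p dvd int m" by (simp add: cong_0_iff)
    moreover have "int m < p" using m(2) np by linarith
    moreover have "0 < int m" using m1 by simp
    ultimately show False using zdvd_imp_le by fastforce
  qed
  thus ?thesis unfolding E_def by blast
qed

lemma LA:
  assumes p: "prime p" and np: "int n < p" and c: "\<not> p dvd c" and c': "\<not> p dvd c'"
    and relA: "zc n p (\<lambda>i j. zmm n B A i j - zmm n A B i j) (\<lambda>i j. c * A i j)"
    and relB: "zc n p (\<lambda>i j. zmm n B' B i j - zmm n B B' i j) (\<lambda>i j. c' * B i j)"
  shows "zc n p A zO"
proof -
  obtain N where "zc n p (zpow n B N) zO" using nilp[OF p np c' relB] by blast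
  thus ?thesis by (rule ann_lemma[OF p c relA])
qed


lemma cong_scale: "[x = y] (mod m) \<Longrightarrow> [k * x = k * y] (mod k * m)" for x y m k :: int
  by (simp add: cong_iff_dvd_diff right_diff_distrib[symmetric] mult_dvd_mono)
lemma cong_unscale: "k \<noteq> 0 \<Longrightarrow> [k * x = 0] (mod k * m) \<Longrightarrow> [x = 0] (mod m)" for x m k :: int
  by (simp add: cong_0_iff)

lemma zI_sum_left: "i < n \<Longrightarrow> (\<Sum>l<n. zI i l * M l j) = M i j"
proof -
  assume i: "i < n"
  have "(\<Sum>l<n. zI i l * M l j) = (\<Sum>l<n. if i = l then M l j else 0)"
    by (rule sum.cong) (auto simp: zI_def)
  also have "\<dots> = M i j" using i by (simp add: sum.delta)
  finally show ?thesis .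
qed
lemma zI_sum_right: "j < n \<Longrightarrow> (\<Sum>l<n. M i l * zI l j) = M i j"
proof -
  assume j: "j < n"
  have "(\<Sum>l<n. M i l * zI l j) = (\<Sum>l<n. if j = l then M i l else 0)"
    by (rule sum.cong) (auto simp: zI_def)
  also have "\<dots> = M i j" using j by (simp add: sum.delta)
  finally show ?thesis .
qed

lemma GL:
  assumes "i < n" "j < n"
  shows "zmm n (\<lambda>i j. zI i j + s * A i j) (\<lambda>i j. zI i j + t * B i j) i j
    = zI i j + t * B i j + s * A i j + s * t * zmm n A B i j"
proof -
  have "zmm n (\<lambda>i j. zI i j + s * A i j) (\<lambda>i j. zI i j + t * B i j) i j
    = (\<Sum>l<n. zI i l * zI l j + t * (zI i l * B l j) + s * (A i l * zI l j) + s * t * (A i l * B l j))"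
    unfolding zmm_def by (rule sum.cong) (auto simp: algebra_simps)
  also have "\<dots> = (\<Sum>l<n. zI i l * zI l j) + t * (\<Sum>l<n. zI i l * B l j) + s * (\<Sum>l<n. A i l * zI l j)
      + s * t * (\<Sum>l<n. A i l * B l j)"
    by (simp add: sum.distrib sum_distrib_left)
  also have "\<dots> = zI i j + t * B i j + s * A i j + s * t * zmm n A B i j"
    using assms by (simp add: zI_sum_left zI_sum_right zmm_def)
  finally show ?thesis .
qed

lemma GL2:
  assumes "i < n" "j < n"
  shows "zmm n (\<lambda>i j. zI i j + s * A i j) (\<lambda>i j. zI i j + x * A i j + y * zmm n A A i j) i j
    = zI i j + (x + s) * A i j + (y + s * x) * zmm n A A i j + s * y * zmm n A (zmm n A A) i j"
proof -
  have "zmm n (\<lambda>i j. zI i j + s * A i j) (\<lambda>i j. zI i j + x * A i j + y * zmm n A A i j) i j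
    = (\<Sum>l<n. zI i l * zI l j + x * (zI i l * A l j) + y * (zI i l * zmm n A A l j)
        + s * (A i l * zI l j) + s * x * (A i l * A l j) + s * y * (A i l * zmm n A A l j))"
    unfolding zmm_def[of n "\<lambda>i j. zI i j + s * A i j"] by (rule sum.cong) (auto simp: algebra_simps)
  also have "\<dots> = (\<Sum>l<n. zI i l * zI l j) + x * (\<Sum>l<n. zI i l * A l j) + y * (\<Sum>l<n. zI i l * zmm n A A l j)
      + s * (\<Sum>l<n. A i l * zI l j) + s * x * (\<Sum>l<n. A i l * A l j) + s * y * (\<Sum>l<n. A i l * zmm n A A l j)"
    by (simp add: sum.distrib sum_distrib_left)
  also have "\<dots> = zI i j + x * A i j + y * zmm n A A i j + s * A i j + s * x * zmm n A A i j
      + s * y * zmm n A (zmm n A A) i j"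
  proof -
    have h1: "(\<Sum>l<n. A i l * A l j) = zmm n A A i j" by (simp add: zmm_def)
    have h2: "(\<Sum>l<n. A i l * zmm n A A l j) = zmm n A (zmm n A A) i j"
      by (simp only: zmm_def[of n A "zmm n A A"])
    show ?thesis
      by (simp only: h1 h2 zI_sum_left[OF assms(1)] zI_sum_right[OF assms(2)])
  qed
  finally show ?thesis by (simp add: algebra_simps)
qed

lemma binom:
  fixes s :: int
  shows "zc n (s^3) (zpow n (\<lambda>i j. zI i j + s * A i j) e)
     (\<lambda>i j. zI i j + int e * s * A i j + int (e choose 2) * s^2 * zmm n A A i j)"
proof (induction e)
  case 0 show ?case by (simp add: numeral_2_eq_2)
next
  case (Suc e)
  let ?X = "\<lambda>i j. zI i j + s * A i j"
  let ?x = "int e * s" and ?y = "int (e choose 2) * s^2"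
  have "zc n (s^3) (zpow n ?X (Suc e)) (zmm n ?X (\<lambda>i j. zI i j + ?x * A i j + ?y * zmm n A A i j))"
    unfolding zpow.simps by (rule zc_mm[OF zc_refl Suc.IH])
  moreover have "zc n (s^3) (zmm n ?X (\<lambda>i j. zI i j + ?x * A i j + ?y * zmm n A A i j))
     (\<lambda>i j. zI i j + int (Suc e) * s * A i j + int (Suc e choose 2) * s^2 * zmm n A A i j)"
    unfolding zc_def
  proof (intro allI impI)
    fix i j assume ij: "i < n" "j < n"
    have ch: "int (Suc e choose 2) = int (e choose 2) + int e"
      by (simp add: numeral_2_eq_2)
    have "zmm n ?X (\<lambda>i j. zI i j + ?x * A i j + ?y * zmm n A A i j) i j
      = zI i j + (?x + s) * A i j + (?y + s * ?x) * zmm n A A i j + s * ?y * zmm n A (zmm n A A) i j"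
      by (rule GL2[OF ij])
    also have "\<dots> = zI i j + (?x + s) * A i j + (?y + s * ?x) * zmm n A A i j + s^3 * (int (e choose 2) * zmm n A (zmm n A A) i j)"
      by (simp add: power2_eq_square power3_eq_cube algebra_simps)
    also have "[\<dots> = zI i j + (?x + s) * A i j + (?y + s * ?x) * zmm n A A i j + 0] (mod s^3)"
      by (intro cong_add cong_refl) (simp add: cong_0_iff)
    also have "zI i j + (?x + s) * A i j + (?y + s * ?x) * zmm n A A i j + 0
       = zI i j + int (Suc e) * s * A i j + int (Suc e choose 2) * s^2 * zmm n A A i j"
      unfolding ch by (simp add: power2_eq_square algebra_simps)
    finally show "[zmm n ?X (\<lambda>i j. zI i j + ?x * A i j + ?y * zmm n A A i j) i j =
        zI i j + int (Suc e) * s * A i j + int (Suc e choose 2) * s^2 * zmm n A A i j] (mod s^3)" .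
  qed
  ultimately show ?case by (rule zc_trans)
qed


lemma zc_scale: "zc n m M M' \<Longrightarrow> zc n (k * m) (\<lambda>i j. k * M i j) (\<lambda>i j. k * M' i j)"
  unfolding zc_def by (auto intro: cong_scale)

lemma core:
  fixes p c0 :: int and a e :: nat
  assumes p: "prime p" and p2: "p > 2" and a: "a \<ge> 1"
    and hX: "zc n (p^a) X zI" and hY: "zc n p Y zI"
    and iX2: "zc n (p^(a+2)) (zmm n Xi X) zI"
    and iY2: "zc n (p^(a+2)) (zmm n Yi Y) zI"
    and hP: "zc n (p^(a+2)) Pw (zpow n X e)"
    and he: "[int e = p * c0] (mod p^2)"
    and rel: "zc n (p^(a+2)) (zmm n Pw (zmm n Xi (zmm n Yi (zmm n X Y)))) zI"
  shows "zc n p (\<lambda>i j. c0 * ((X i j - zI i j) div p^a)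
      + zmm n (\<lambda>i j. (X i j - zI i j) div p^a) (\<lambda>i j. (Y i j - zI i j) div p) i j
      - zmm n (\<lambda>i j. (Y i j - zI i j) div p) (\<lambda>i j. (X i j - zI i j) div p^a) i j) zO"
proof -
  define A where "A = (\<lambda>i j. (X i j - zI i j) div p^a)"
  define B where "B = (\<lambda>i j. (Y i j - zI i j) div p)"
  define s where "s = p^a"
  define q where "q = p^(a+2)"
  define P1 where "P1 = p^(a+1)"
  define X' where "X' = (\<lambda>i j. zI i j + s * A i j)"
  define Y' where "Y' = (\<lambda>i j. zI i j + p * B i j)"
  define D where "D = (\<lambda>i j. zmm n A B i j - zmm n B A i j)"
  have p0: "p \<noteq> 0" using p by auto
  have P1p: "P1 * p = q" unfolding P1_def q_def by simp
  have sp: "s * p = P1" unfolding P1_def s_def by simp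
  have XX': "zc n 0 X X'"
    unfolding zc_0 X'_def A_def s_def
  proof (intro allI impI)
    fix i j assume "i < n" "j < n"
    hence "p^a dvd X i j - zI i j" using hX unfolding zc_def by (simp add: cong_iff_dvd_diff)
    thus "X i j = zI i j + p^a * ((X i j - zI i j) div p^a)" by simp
  qed
  have YY': "zc n 0 Y Y'"
    unfolding zc_0 Y'_def B_def
  proof (intro allI impI)
    fix i j assume "i < n" "j < n"
    hence "p dvd Y i j - zI i j" using hY unfolding zc_def by (simp add: cong_iff_dvd_diff)
    thus "Y i j = zI i j + p * ((Y i j - zI i j) div p)" by simp
  qed
  have pdq: "p dvd q" unfolding q_def by simp
  have Xip: "zc n p Xi zI"
  proof -
    have "zc n p Xi (zmm n Xi zI)" by (rule zc_0D[OF zc_sym[OF zmm_I_right]])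
    also have "zc n p \<dots> (zmm n Xi X)"
      by (rule zc_mm[OF zc_refl zc_sym[OF zc_dvd[OF hX]]]) (use a in \<open>simp add: dvd_power\<close>)
    also have "zc n p \<dots> zI" using zc_dvd[OF iX2] pdq unfolding q_def by blast
    finally show ?thesis .
  qed
  have Yip: "zc n p Yi zI"
  proof -
    have "zc n p Yi (zmm n Yi zI)" by (rule zc_0D[OF zc_sym[OF zmm_I_right]])
    also have "zc n p \<dots> (zmm n Yi Y)" by (rule zc_mm[OF zc_refl zc_sym[OF hY]])
    also have "zc n p \<dots> zI" using zc_dvd[OF iY2] pdq unfolding q_def by blast
    finally show ?thesis .
  qed
  have XYc: "zc n 0 (zmm n X' Y') (\<lambda>i j. zmm n Y' X' i j + P1 * D i j)"
    unfolding zc_0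
  proof (intro allI impI)
    fix i j assume ij: "i < n" "j < n"
    have "zmm n X' Y' i j = zI i j + p * B i j + s * A i j + s * p * zmm n A B i j"
      unfolding X'_def Y'_def by (rule GL[OF ij])
    moreover have "zmm n Y' X' i j = zI i j + s * A i j + p * B i j + p * s * zmm n B A i j"
      unfolding X'_def Y'_def by (rule GL[OF ij])
    ultimately show "zmm n X' Y' i j = zmm n Y' X' i j + P1 * D i j"
      unfolding D_def sp[symmetric] by (simp add: algebra_simps)
  qed
  have C1: "zc n q (zmm n Xi (zmm n Yi (zmm n X Y))) (\<lambda>i j. zI i j + P1 * D i j)"
  proof -
    have "zc n q (zmm n Xi (zmm n Yi (zmm n X Y))) (zmm n Xi (zmm n Yi (\<lambda>i j. zmm n Y' X' i j + P1 * D i j)))"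
      by (rule zc_0D, intro zc_mm zc_refl, rule zc_trans[OF zc_mm[OF XX' YY'] XYc])
    also have "zc n q (zmm n Xi (zmm n Yi (\<lambda>i j. zmm n Y' X' i j + P1 * D i j)))
       (\<lambda>i j. zmm n Xi (zmm n Yi (zmm n Y' X')) i j + P1 * zmm n Xi (zmm n Yi D) i j)"
      by (simp only: zmm_add_right zmm_smul_right zc_refl)
    also have "zc n q \<dots> (\<lambda>i j. zI i j + P1 * D i j)"
    proof (rule zc_add)
      have "zc n q (zmm n Xi (zmm n Yi (zmm n Y' X'))) (zmm n Xi (zmm n (zmm n Yi Y') X'))" by (simp only: zmm_assoc zc_refl)
      also have "zc n q \<dots> (zmm n Xi (zmm n zI X'))"
      proof (intro zc_mm zc_refl)
        show "zc n q (zmm n Yi Y') zI"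
          using zc_trans[OF zc_mm[OF zc_refl zc_0D[OF zc_sym[OF YY']]] iY2] unfolding q_def .
      qed
      also have "zc n q \<dots> (zmm n Xi X')" by (rule zc_0D[OF zc_mm[OF zc_refl zmm_I_left]])
      also have "zc n q \<dots> zI"
        using zc_trans[OF zc_mm[OF zc_refl zc_0D[OF zc_sym[OF XX']]] iX2] unfolding q_def .
      finally show "zc n q (zmm n Xi (zmm n Yi (zmm n Y' X'))) zI" .
    next
      have "zc n p (zmm n Xi (zmm n Yi D)) (zmm n zI (zmm n zI D))"
        by (intro zc_mm Xip Yip zc_refl)
      also have "zc n p \<dots> D"
        by (rule zc_0D[OF zc_trans[OF zc_mm[OF zc_refl zmm_I_left] zmm_I_left]])
      finally have "zc n (P1 * p) (\<lambda>i j. P1 * zmm n Xi (zmm n Yi D) i j) (\<lambda>i j. P1 * D i j)"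
        by (rule zc_scale)
      thus "zc n q (\<lambda>i j. P1 * zmm n Xi (zmm n Yi D) i j) (\<lambda>i j. P1 * D i j)" unfolding P1p .
    qed
    finally show ?thesis .
  qed
  have pe: "p dvd int e"
  proof -
    have "[int e = p * c0] (mod p)" using cong_dvd_modulus[OF he] by (simp add: power2_eq_square)
    thus ?thesis by (simp add: cong_iff_dvd_diff) (metis dvd_diff_commute dvd_triv_left dvd_add_right_iff diff_add_cancel)
  qed
  have pch: "p dvd int (e choose 2)"
  proof -
    have ev: "even (e * (e - 1))" by (cases e) auto
    have "2 * (e choose 2) = e * (e - 1)"
      unfolding choose_two using ev by (rule dvd_mult_div_cancel)
    hence "2 * int (e choose 2) = int e * int (e - 1)" by (metis of_nat_mult of_nat_numeral)
    hence "p dvd 2 * int (e choose 2)" using pe by simp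
    moreover have "\<not> p dvd 2"
    proof
      assume "p dvd 2" hence "p \<le> 2" by (simp add: zdvd_imp_le)
      thus False using p2 by simp
    qed
    ultimately show ?thesis using p by (simp add: prime_dvd_mult_iff)
  qed
  define U where "U = (\<lambda>i j. zI i j + (P1 * c0) * A i j)"
  have PU: "zc n q Pw U"
  proof -
    have "zc n q Pw (zpow n X e)" using hP unfolding q_def .
    also have "zc n q \<dots> (zpow n X' e)" by (rule zc_0D, rule zpow_cong[OF XX'])
    also have "zc n q \<dots> (\<lambda>i j. zI i j + int e * s * A i j + int (e choose 2) * s^2 * zmm n A A i j)"
    proof -
      have "s^3 = p^(a*3)" unfolding s_def by (simp add: power_mult)
      moreover have "p^(a+2) dvd p^(a*3)" by (rule le_imp_power_dvd) (use a in simp)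
      ultimately have "q dvd s^3" unfolding q_def by simp
      thus ?thesis unfolding X'_def using zc_dvd[OF binom] by blast
    qed
    also have "zc n q \<dots> U"
      unfolding U_def zc_def
    proof (intro allI impI)
      fix i j assume ij: "i < n" "j < n"
      have e1: "[int e * s * A i j = P1 * c0 * A i j] (mod q)"
      proof -
        have "[s * int e = s * (p * c0)] (mod s * p^2)" by (rule cong_scale[OF he])
        moreover have "s * p^2 = q" unfolding s_def q_def by (simp add: power_add power2_eq_square)
        ultimately have "[int e * s = P1 * c0] (mod q)"
          unfolding sp[symmetric] by (simp add: algebra_simps)
        thus ?thesis by (rule cong_scalar_right)
      qed
      have e2: "[int (e choose 2) * s^2 * zmm n A A i j = 0] (mod q)"
      proof -
        have "p * s^2 dvd int (e choose 2) * s^2" using pch by simp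
        moreover have "q dvd p * s^2"
        proof -
          have "p * s^2 = p^(Suc (a*2))" unfolding s_def by (simp add: power_mult)
          moreover have "p^(a+2) dvd p^(Suc (a*2))" by (rule le_imp_power_dvd) (use a in simp)
          ultimately show ?thesis unfolding q_def by metis
        qed
        ultimately show ?thesis by (simp add: cong_0_iff dvd_trans)
      qed
      have "[zI i j + int e * s * A i j + int (e choose 2) * s^2 * zmm n A A i j
          = zI i j + P1 * c0 * A i j + 0] (mod q)"
        by (intro cong_add cong_refl e1 e2)
      thus "[zI i j + int e * s * A i j + int (e choose 2) * s^2 * zmm n A A i j
          = zI i j + P1 * c0 * A i j] (mod q)" by simp
    qed
    finally show ?thesis .
  qed
  have R: "zc n q (zmm n U (\<lambda>i j. zI i j + P1 * D i j)) zI"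
    using zc_trans[OF zc_mm[OF zc_sym[OF PU] zc_sym[OF C1]] rel[folded q_def]] .
  have fin: "zc n p (\<lambda>i j. c0 * A i j + zmm n A B i j - zmm n B A i j) zO"
    unfolding zc_def zO_def
  proof (intro allI impI)
    fix i j assume ij: "i < n" "j < n"
    have "zmm n U (\<lambda>i j. zI i j + P1 * D i j) i j
       = zI i j + P1 * D i j + P1 * c0 * A i j + P1 * c0 * P1 * zmm n A D i j"
      unfolding U_def by (rule GL[OF ij])
    also have "[\<dots> = zI i j + P1 * D i j + P1 * c0 * A i j + 0] (mod q)"
    proof (intro cong_add cong_refl)
      have "P1 * P1 = p^((a+1)+(a+1))" unfolding P1_def by (simp add: power_add)
      moreover have "p^(a+2) dvd p^((a+1)+(a+1))" by (rule le_imp_power_dvd) (use a in simp)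
      ultimately have "q dvd P1 * P1" unfolding q_def by simp
      moreover have "P1 * c0 * P1 * zmm n A D i j = (P1 * P1) * (c0 * zmm n A D i j)" by (simp add: algebra_simps)
      ultimately show "[P1 * c0 * P1 * zmm n A D i j = 0] (mod q)"
        unfolding cong_0_iff by (metis dvd_mult2)
    qed
    finally have F: "[zmm n U (\<lambda>i j. zI i j + P1 * D i j) i j = zI i j + P1 * D i j + P1 * c0 * A i j + 0] (mod q)" .
    have R': "[zmm n U (\<lambda>i j. zI i j + P1 * D i j) i j = zI i j] (mod q)" using R ij unfolding zc_def by blast
    have "[zI i j + P1 * D i j + P1 * c0 * A i j + 0 = zI i j] (mod q)" using F R' cong_sym cong_trans by blast
    hence "[zI i j + P1 * (c0 * A i j + D i j) = zI i j + 0] (mod q)" by (simp add: algebra_simps)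
    hence "[P1 * (c0 * A i j + D i j) = 0] (mod P1 * p)"
      unfolding P1p by (rule cong_add_lcancel[THEN iffD1])
    hence "[c0 * A i j + D i j = 0] (mod p)" by (rule cong_unscale[rotated]) (simp add: P1_def p0)
    thus "[c0 * A i j + zmm n A B i j - zmm n B A i j = 0] (mod p)"
      unfolding D_def by (simp add: algebra_simps)
  qed
  thus ?thesis unfolding A_def B_def .
qed


definition lv :: "zpmat \<Rightarrow> nat \<Rightarrow> imat" where "lv X k = (\<lambda>i j. X i j k)"

lemma padic_coh:
  assumes "padic p a" "k \<le> k'" shows "a k' mod p^k = a k"
  using assms(2)
proof (induction k' rule: dec_induct)
  case base
  have "0 \<le> a k" "a k < p^k" using assms(1) unfolding padic_def by auto
  thus ?case by simp
next
  case (step k')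
  have "p^k dvd p^k'" using step.hyps(1) by (rule le_imp_power_dvd)
  hence "a (Suc k') mod p^k = (a (Suc k') mod p^k') mod p^k" by (simp add: mod_mod_cancel)
  also have "a (Suc k') mod p^k' = a k'" using assms(1) unfolding padic_def by auto
  finally show ?case using step.IH by simp
qed

lemma zpmat_coh:
  assumes "zpmat p n X" "k \<le> k'" shows "zc n (p^k) (lv X k') (lv X k)"
  unfolding zc_def lv_def cong_def
proof (intro allI impI)
  fix i j assume "i < n" "j < n"
  hence pa: "padic p (X i j)" using assms(1) unfolding zpmat_def by blast
  have "X i j k' mod p^k = X i j k" by (rule padic_coh[OF pa assms(2)])
  moreover have "X i j k mod p^k = X i j k" using padic_coh[OF pa le_refl] .
  ultimately show "X i j k' mod p^k = X i j k mod p^k" by simp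
qed

lemma mul_lv: "zc n (p^k) (lv (mat_mul p n X Y) k) (zmm n (lv X k) (lv Y k))"
  unfolding zc_def lv_def mat_mul_def zmm_def cong_def by simp

lemma one_lv: "zc n (p^k) (lv (mat_one p n) k) zI"
  unfolding zc_def lv_def mat_one_def zI_def cong_def by simp

lemma pow_lv: "zc n (p^k) (lv (mat_pow p n X e) k) (zpow n (lv X k) e)"
proof (induction e)
  case 0 show ?case by (simp add: one_lv)
next
  case (Suc e)
  have "zc n (p^k) (lv (mat_pow p n X (Suc e)) k) (zmm n (lv X k) (lv (mat_pow p n X e) k))"
    unfolding mat_pow.simps by (rule mul_lv)
  also have "zc n (p^k) \<dots> (zpow n (lv X k) (Suc e))"
    unfolding zpow.simps by (rule zc_mm[OF zc_refl Suc.IH])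
  finally show ?case .
qed

lemma zpmat_eq:
  assumes p: "p > 0" and X: "zpmat p n X" and Y: "zpmat p n Y"
    and c: "\<And>k. zc n (p^k) (lv X k) (lv Y k)"
  shows "X = Y"
proof (intro ext)
  fix i j k
  show "X i j k = Y i j k"
  proof (cases "i < n \<and> j < n")
    case True
    hence "padic p (X i j)" "padic p (Y i j)" using X Y unfolding zpmat_def by auto
    hence "0 \<le> X i j k" "X i j k < p^k" "0 \<le> Y i j k" "Y i j k < p^k" unfolding padic_def by auto
    moreover have "[X i j k = Y i j k] (mod p^k)" using c[of k] True unfolding zc_def lv_def by auto
    ultimately show ?thesis by (rule cong_less_imp_eq_int)
  next
    case False
    thus ?thesis using X Y unfolding zpmat_def by auto
  qed
qed

lemma one_zpmat: assumes "p > 1" shows "zpmat p n (mat_one p n)"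
proof -
  have pk: "p^k > 0" for k using assms by simp
  have pa1: "padic p (\<lambda>k. 1 mod p^k)"
    unfolding padic_def
  proof (intro allI conjI)
    fix k
    show "0 \<le> 1 mod p^k" using pk[of k] by simp
    show "1 mod p^k < p^k" using pk[of k] by simp
    have "p^k dvd p^Suc k" by (simp add: le_imp_power_dvd)
    thus "1 mod p^Suc k mod p^k = 1 mod p^k" by (simp add: mod_mod_cancel)
  qed
  have pa0: "padic p (\<lambda>k. 0)" unfolding padic_def using pk by auto
  show ?thesis unfolding zpmat_def
  proof (intro allI conjI impI)
    fix i j assume ij: "i < n \<and> j < n"
    show "padic p (mat_one p n i j)"
    proof (cases "i = j")
      case True thus ?thesis using pa1 ij unfolding mat_one_def by simp
    next
      case False thus ?thesis using pa0 unfolding mat_one_def by simp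
    qed
  next
    fix i j assume "\<not> (i < n \<and> j < n)"
    thus "mat_one p n i j = (\<lambda>k. 0)" unfolding mat_one_def by auto
  qed
qed

lemma inv_props:
  assumes p: "p > 1" and G: "GL1 p n X"
  shows "zpmat p n (mat_inv p n X) \<and> mat_mul p n X (mat_inv p n X) = mat_one p n
    \<and> mat_mul p n (mat_inv p n X) X = mat_one p n"
proof -
  obtain Y0 where Y0: "zpmat p n Y0" "mat_mul p n X Y0 = mat_one p n" "mat_mul p n Y0 X = mat_one p n"
    using G unfolding GL1_def by blast
  have uniq: "Y = Y0" if Y: "zpmat p n Y" "mat_mul p n X Y = mat_one p n" "mat_mul p n Y X = mat_one p n" for Y
  proof (rule zpmat_eq[OF _ Y(1) Y0(1)])
    show "p > 0" using p by simp
    fix k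
    have "zc n (p^k) (lv Y k) (zmm n (lv Y k) zI)" by (rule zc_0D[OF zc_sym[OF zmm_I_right]])
    also have "zc n (p^k) \<dots> (zmm n (lv Y k) (lv (mat_mul p n X Y0) k))"
      unfolding Y0(2) by (rule zc_mm[OF zc_refl zc_sym[OF one_lv]])
    also have "zc n (p^k) \<dots> (zmm n (lv Y k) (zmm n (lv X k) (lv Y0 k)))"
      by (rule zc_mm[OF zc_refl mul_lv])
    also have "zc n (p^k) (zmm n (lv Y k) (zmm n (lv X k) (lv Y0 k))) (zmm n (zmm n (lv Y k) (lv X k)) (lv Y0 k))"
      by (simp only: zmm_assoc zc_refl)
    also have "zc n (p^k) \<dots> (zmm n (lv (mat_mul p n Y X) k) (lv Y0 k))"
      by (rule zc_mm[OF zc_sym[OF mul_lv] zc_refl])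
    also have "zc n (p^k) \<dots> (zmm n zI (lv Y0 k))"
      unfolding Y(3) by (rule zc_mm[OF one_lv zc_refl])
    also have "zc n (p^k) \<dots> (lv Y0 k)" by (rule zc_0D[OF zmm_I_left])
    finally show "zc n (p^k) (lv Y k) (lv Y0 k)" .
  qed
  have "mat_inv p n X = Y0"
    unfolding mat_inv_def
  proof (rule the_equality)
    show "zpmat p n Y0 \<and> mat_mul p n X Y0 = mat_one p n \<and> mat_mul p n Y0 X = mat_one p n" using Y0 by blast
  next
    fix Y assume "zpmat p n Y \<and> mat_mul p n X Y = mat_one p n \<and> mat_mul p n Y X = mat_one p n"
    thus "Y = Y0" using uniq by blast
  qed
  thus ?thesis using Y0 by simp
qed

lemma GL1_lv:
  assumes p: "p > 1" and G: "GL1 p n X" and k: "k \<ge> 1"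
  shows "zc n p (lv X k) zI"
proof -
  have "zc n p (lv X 1) zI"
    using G p unfolding GL1_def zc_def lv_def mat_one_def zI_def by auto
  moreover have "zc n (p^1) (lv X k) (lv X 1)"
    by (rule zpmat_coh) (use G k in \<open>auto simp: GL1_def\<close>)
  ultimately show ?thesis using zc_trans by (metis power_one_right)
qed


lemma level_rel:
  fixes p :: int and a :: nat and c :: "nat \<Rightarrow> int"
  assumes p: "prime p" and p2: "p > 2" and a: "a \<ge> 1"
    and GX: "GL1 p n X" and GY: "GL1 p n Y"
    and cP: "padic p c" and c1: "c 1 \<noteq> 0"
    and hrel: "mat_mul p n (mat_zpow p n X (padic_times_p p c)) (mat_comm p n X Y) = mat_one p n"
    and hX: "zc n (p^a) (lv X a) zI"
  shows "zc n p (\<lambda>i j. c (a+2) * ((lv X (a+2) i j - zI i j) div p^a)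
      + zmm n (\<lambda>i j. (lv X (a+2) i j - zI i j) div p^a) (\<lambda>i j. (lv Y (a+2) i j - zI i j) div p) i j
      - zmm n (\<lambda>i j. (lv Y (a+2) i j - zI i j) div p) (\<lambda>i j. (lv X (a+2) i j - zI i j) div p^a) i j) zO
    \<and> \<not> p dvd c (a+2)"
proof
  define K where "K = a + 2"
  have p1: "p > 1" using p2 by simp
  have p0: "p > 0" using p2 by simp
  have zX: "zpmat p n X" and zY: "zpmat p n Y" using GX GY unfolding GL1_def by auto
  have iX: "mat_mul p n (mat_inv p n X) X = mat_one p n" using inv_props[OF p1 GX] by blast
  have iY: "mat_mul p n (mat_inv p n Y) Y = mat_one p n" using inv_props[OF p1 GY] by blast
  define e where "e = nat ((p * c K) mod p^K)"
  have hXK: "zc n (p^a) (lv X K) zI"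
    using zc_trans[OF zpmat_coh[OF zX, of a K] hX] unfolding K_def by simp
  have hYK: "zc n p (lv Y K) zI" by (rule GL1_lv[OF p1 GY]) (simp add: K_def)
  have iX2: "zc n (p^(a+2)) (zmm n (lv (mat_inv p n X) K) (lv X K)) zI"
    unfolding K_def by (metis iX mul_lv one_lv zc_sym zc_trans)
  have iY2: "zc n (p^(a+2)) (zmm n (lv (mat_inv p n Y) K) (lv Y K)) zI"
    unfolding K_def by (metis iY mul_lv one_lv zc_sym zc_trans)
  have hP: "zc n (p^(a+2)) (lv (mat_zpow p n X (padic_times_p p c)) K) (zpow n (lv X K) e)"
  proof -
    have "lv (mat_zpow p n X (padic_times_p p c)) K = lv (mat_pow p n X e) K"
      unfolding lv_def mat_zpow_def padic_times_p_def e_def by simp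
    thus ?thesis unfolding K_def using pow_lv by metis
  qed
  have he: "[int e = p * c K] (mod p^2)"
  proof -
    have "int e = (p * c K) mod p^K" unfolding e_def using p0 by simp
    hence "[int e = p * c K] (mod p^K)" by (simp add: cong_def)
    moreover have "p^2 dvd p^K" unfolding K_def by (rule le_imp_power_dvd) simp
    ultimately show ?thesis by (rule cong_dvd_modulus)
  qed
  have rel: "zc n (p^(a+2)) (zmm n (lv (mat_zpow p n X (padic_times_p p c)) K)
      (zmm n (lv (mat_inv p n X) K) (zmm n (lv (mat_inv p n Y) K) (zmm n (lv X K) (lv Y K))))) zI"
  proof -
    let ?P = "mat_zpow p n X (padic_times_p p c)"
    have "zc n (p^K) (zmm n (lv ?P K) (zmm n (lv (mat_inv p n X) K) (zmm n (lv (mat_inv p n Y) K) (zmm n (lv X K) (lv Y K)))))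
        (lv (mat_mul p n ?P (mat_comm p n X Y)) K)"
      unfolding mat_comm_def
      by (intro zc_sym[OF zc_trans[OF mul_lv]] zc_mm[OF zc_refl] zc_trans[OF mul_lv] mul_lv)
    also have "zc n (p^K) \<dots> zI" unfolding hrel by (rule one_lv)
    finally show ?thesis unfolding K_def .
  qed
  note C = core[OF p p2 a hXK[unfolded K_def] hYK[unfolded K_def] iX2[unfolded K_def] iY2[unfolded K_def]
     hP[unfolded K_def] he[unfolded K_def] rel[unfolded K_def]]
  show "zc n p (\<lambda>i j. c (a+2) * ((lv X (a+2) i j - zI i j) div p^a)
      + zmm n (\<lambda>i j. (lv X (a+2) i j - zI i j) div p^a) (\<lambda>i j. (lv Y (a+2) i j - zI i j) div p) i j
      - zmm n (\<lambda>i j. (lv Y (a+2) i j - zI i j) div p) (\<lambda>i j. (lv X (a+2) i j - zI i j) div p^a) i j) zO"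
    using C .
  show "\<not> p dvd c (a+2)"
  proof
    assume "p dvd c (a+2)"
    hence "c (a+2) mod p = 0" by simp
    moreover have "c (a+2) mod p^1 = c 1" by (rule padic_coh[OF cP]) simp
    ultimately show False using c1 by simp
  qed
qed


lemma conv_rel:
  assumes "zc n p (\<lambda>i j. c * A i j + zmm n A B i j - zmm n B A i j) zO"
  shows "zc n p (\<lambda>i j. zmm n B A i j - zmm n A B i j) (\<lambda>i j. c * A i j)"
  unfolding zc_def
proof (intro allI impI)
  fix i j assume "i < n" "j < n"
  hence "p dvd c * A i j + zmm n A B i j - zmm n B A i j"
    using assms unfolding zc_def zO_def by (simp add: cong_0_iff)
  hence "p dvd - (c * A i j + zmm n A B i j - zmm n B A i j)" by (simp only: dvd_minus_iff)
  thus "[zmm n B A i j - zmm n A B i j = c * A i j] (mod p)"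
    by (simp add: cong_iff_dvd_diff algebra_simps)
qed

lemma D0_T2:
  assumes p: "p > 1" and G: "GL1 p n X"
    and D: "zc n p (\<lambda>i j. (lv X 3 i j - zI i j) div p) zO"
  shows "zc n (p^2) (lv X 2) zI"
proof -
  have z: "zpmat p n X" using G unfolding GL1_def by blast
  have "zc n (p^2) (lv X 3) zI"
    unfolding zc_def
  proof (intro allI impI)
    fix i j assume ij: "i < n" "j < n"
    have "[lv X 3 i j = zI i j] (mod p)" using GL1_lv[OF p G, of 3] ij unfolding zc_def by simp
    hence "p dvd lv X 3 i j - zI i j" by (simp add: cong_iff_dvd_diff)
    then obtain t where t: "lv X 3 i j - zI i j = p * t" by blast
    have "p dvd (lv X 3 i j - zI i j) div p" using D ij unfolding zc_def zO_def by (simp add: cong_0_iff)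
    hence "p dvd t" using t p by simp
    hence "p * p dvd lv X 3 i j - zI i j" unfolding t by simp
    thus "[lv X 3 i j = zI i j] (mod p^2)" by (simp add: cong_iff_dvd_diff power2_eq_square)
  qed
  moreover have "zc n (p^2) (lv X 2) (lv X 3)" by (rule zc_sym[OF zpmat_coh[OF z]]) simp
  ultimately show ?thesis by (metis zc_trans)
qed

lemma T2_B0:
  assumes p: "p > 1" and z: "zpmat p n Y" and T: "zc n (p^2) (lv Y 2) zI" and K: "2 \<le> K"
  shows "zc n p (\<lambda>i j. (lv Y K i j - zI i j) div p) zO"
  unfolding zc_def zO_def
proof (intro allI impI)
  fix i j assume ij: "i < n" "j < n"
  have "zc n (p^2) (lv Y K) zI" using zc_trans[OF zpmat_coh[OF z K] T] .
  hence "p * p dvd lv Y K i j - zI i j" using ij unfolding zc_def by (simp add: cong_iff_dvd_diff power2_eq_square)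
  then obtain t where "lv Y K i j - zI i j = p * p * t" by blast
  hence "(lv Y K i j - zI i j) div p = p * t" using p by simp
  thus "[(lv Y K i j - zI i j) div p = 0] (mod p)" by (simp add: cong_0_iff)
qed

lemma A0_T:
  assumes p: "p > 1" and z: "zpmat p n X" and hX: "zc n (p^a) (lv X K) zI"
    and A: "zc n p (\<lambda>i j. (lv X K i j - zI i j) div p^a) zO" and K: "a + 1 \<le> K"
  shows "zc n (p^(a+1)) (lv X (a+1)) zI"
proof -
  have "zc n (p^(a+1)) (lv X K) zI"
    unfolding zc_def
  proof (intro allI impI)
    fix i j assume ij: "i < n" "j < n"
    have "p^a dvd lv X K i j - zI i j" using hX ij unfolding zc_def by (simp add: cong_iff_dvd_diff)
    then obtain t where t: "lv X K i j - zI i j = p^a * t" by blast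
    have "p dvd (lv X K i j - zI i j) div p^a" using A ij unfolding zc_def zO_def by (simp add: cong_0_iff)
    hence "p dvd t" using t p by simp
    hence "p^a * p dvd lv X K i j - zI i j" unfolding t by simp
    thus "[lv X K i j = zI i j] (mod p^(a+1))" by (simp add: cong_iff_dvd_diff mult.commute)
  qed
  moreover have "zc n (p^(a+1)) (lv X (a+1)) (lv X K)" by (rule zc_sym[OF zpmat_coh[OF z K]])
  ultimately show ?thesis by (metis zc_trans)
qed

theorem theorem1p9:
  fixes p :: int and m n :: nat
    and c :: "nat \<Rightarrow> nat \<Rightarrow> int"
    and X :: "nat \<Rightarrow> zpmat"
  assumes "prime p" and "p > 2" and "m \<ge> 2"
    and "\<forall>i\<in>{1..2*m}. padic p (c i) \<and> c i 1 \<noteq> 0"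
    and "int n < p"
    and "\<forall>i\<in>{1..2*m}. GL1 p n (X i)"
    and "\<forall>i\<in>{1..2*m}.
           mat_mul p n (mat_zpow p n (X i) (padic_times_p p (c i)))
             (mat_comm p n (X i) (X (if i = 2*m then 1 else Suc i))) = mat_one p n"
  shows "\<forall>i\<in>{1..2*m}. X i = mat_one p n"
proof
  note p = assms(1) and p2 = assms(2) and cA = assms(4) and np = assms(5) and GA = assms(6) and RA = assms(7)
  have p1: "p > 1" and p0: "p > 0" using p2 by auto
  define nx where "nx j = (if j = 2*m then 1 else Suc j)" for j :: nat
  have nxin: "nx j \<in> {1..2*m}" if "j \<in> {1..2*m}" for j
    using that assms(3) unfolding nx_def by auto
  define Dm where "Dm j = (\<lambda>i' j'. (lv (X j) 3 i' j' - zI i' j') div p)" for j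
  have rel1: "zc n p (\<lambda>i' j'. zmm n (Dm (nx j)) (Dm j) i' j' - zmm n (Dm j) (Dm (nx j)) i' j') (\<lambda>i' j'. c j 3 * Dm j i' j')
     \<and> \<not> p dvd c j 3" if j: "j \<in> {1..2*m}" for j
  proof -
    have hX: "zc n (p^1) (lv (X j) 1) zI" using GL1_lv[OF p1 GA[rule_format, OF j], of 1] by simp
    have L: "zc n p (\<lambda>i j'. c j (1+2) * ((lv (X j) (1+2) i j' - zI i j') div p^1)
      + zmm n (\<lambda>i j'. (lv (X j) (1+2) i j' - zI i j') div p^1) (\<lambda>i j'. (lv (X (nx j)) (1+2) i j' - zI i j') div p) i j'
      - zmm n (\<lambda>i j'. (lv (X (nx j)) (1+2) i j' - zI i j') div p) (\<lambda>i j'. (lv (X j) (1+2) i j' - zI i j') div p^1) i j') zO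
    \<and> \<not> p dvd c j (1+2)"
      by (rule level_rel[OF p p2 le_refl GA[rule_format, OF j] GA[rule_format, OF nxin[OF j]]
            conjunct1[OF cA[rule_format, OF j]] conjunct2[OF cA[rule_format, OF j]] _ hX])
         (use RA j in \<open>simp add: nx_def\<close>)
    hence "zc n p (\<lambda>i j'. c j 3 * Dm j i j' + zmm n (Dm j) (Dm (nx j)) i j' - zmm n (Dm (nx j)) (Dm j) i j') zO
       \<and> \<not> p dvd c j 3"
      unfolding Dm_def by (simp add: numeral_3_eq_3)
    thus ?thesis using conv_rel by blast
  qed
  have T2: "zc n (p^2) (lv (X j) 2) zI" if j: "j \<in> {1..2*m}" for j
  proof -
    have "zc n p (Dm j) zO"
      by (rule LA[OF p np _ _ conjunct1[OF rel1[OF j]] conjunct1[OF rel1[OF nxin[OF j]]]])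
         (use rel1 j nxin in auto)
    thus ?thesis unfolding Dm_def by (rule D0_T2[OF p1 GA[rule_format, OF j]])
  qed
  fix i assume i: "i \<in> {1..2*m}"
  have G: "GL1 p n (X i)" using GA i by blast
  have z: "zpmat p n (X i)" using G unfolding GL1_def by blast
  show "X i = mat_one p n"
  proof (rule ccontr)
    assume ne: "X i \<noteq> mat_one p n"
    define T where "T k = zc n (p^k) (lv (X i) k) zI" for k
    have "\<exists>k. \<not> T k"
    proof (rule ccontr)
      assume "\<not> (\<exists>k. \<not> T k)"
      hence "\<forall>k. T k" by blast
      hence "X i = mat_one p n"
        by (intro zpmat_eq[OF p0 z one_zpmat[OF p1]]) (metis T_def one_lv zc_sym zc_trans)
      thus False using ne by blast
    qed
    define k0 where "k0 = (LEAST k. \<not> T k)"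
    have nk0: "\<not> T k0" unfolding k0_def using \<open>\<exists>k. \<not> T k\<close> by (metis LeastI)
    have T0: "T 0" unfolding T_def zc_def by simp
    have T1: "T 1" unfolding T_def using GL1_lv[OF p1 G, of 1] by simp
    have k2: "k0 \<ge> 2"
    proof (rule ccontr)
      assume "\<not> k0 \<ge> 2"
      hence "k0 = 0 \<or> k0 = 1" by arith
      thus False using nk0 T0 T1 by auto
    qed
    define a where "a = k0 - 1"
    have a: "k0 = a + 1" "a \<ge> 1" using k2 unfolding a_def by auto
    have Ta: "T a" unfolding k0_def using a(1) not_less_Least[of a "\<lambda>k. \<not> T k"] unfolding k0_def by fastforce
    have Ta1: "\<not> T (a+1)" using nk0 a by simp
    note LR = level_rel[OF p p2 a(2) G GA[rule_format, OF nxin[OF i]] conjunct1[OF cA[rule_format, OF i]]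
        conjunct2[OF cA[rule_format, OF i]] _ Ta[unfolded T_def]]
    have R: "zc n p (\<lambda>i' j. c i (a+2) * ((lv (X i) (a+2) i' j - zI i' j) div p^a)
      + zmm n (\<lambda>i' j. (lv (X i) (a+2) i' j - zI i' j) div p^a) (\<lambda>i' j. (lv (X (nx i)) (a+2) i' j - zI i' j) div p) i' j
      - zmm n (\<lambda>i' j. (lv (X (nx i)) (a+2) i' j - zI i' j) div p) (\<lambda>i' j. (lv (X i) (a+2) i' j - zI i' j) div p^a) i' j) zO
      \<and> \<not> p dvd c i (a+2)"
      by (rule LR) (use RA i in \<open>simp add: nx_def\<close>)
    define A where "A = (\<lambda>i' j. (lv (X i) (a+2) i' j - zI i' j) div p^a)"
    define B where "B = (\<lambda>i' j. (lv (X (nx i)) (a+2) i' j - zI i' j) div p)"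
    define c0 where "c0 = c i (a+2)"
    have R1: "zc n p (\<lambda>i' j. c0 * A i' j + zmm n A B i' j - zmm n B A i' j) zO" and c0: "\<not> p dvd c0"
      using R unfolding A_def B_def c0_def by auto
    have zY: "zpmat p n (X (nx i))" using GA nxin[OF i] unfolding GL1_def by blast
    have B0: "zc n p B zO" unfolding B_def by (rule T2_B0[OF p1 zY T2[OF nxin[OF i]]]) simp
    have AB: "zc n p (zmm n A B) zO" using zc_mm[OF zc_refl B0, of A] by simp
    have BA: "zc n p (zmm n B A) zO" using zc_mm[OF B0 zc_refl, of A] by simp
    have "zc n p (\<lambda>i' j. c0 * A i' j + zmm n A B i' j - zmm n B A i' j) (\<lambda>i' j. c0 * A i' j + zO i' j - zO i' j)"
      by (rule zc_diff[OF zc_add[OF zc_refl AB] BA])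
    hence "zc n p (\<lambda>i' j. c0 * A i' j) zO"
      using R1 by (simp add: zO_def) (metis (no_types, lifting) zc_sym zc_trans)
    hence A0: "zc n p A zO" by (rule zc_cancel[OF p c0])
    have "T (a+1)" unfolding T_def
      by (rule A0_T[OF p1 z _ A0[unfolded A_def]])
         (use Ta[unfolded T_def] zpmat_coh[OF z, of a "a+2"] in \<open>auto intro: zc_trans\<close>)
    thus False using Ta1 by blast
  qed
qed


end
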